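(* Let $\mathrm{H}$ be a Hilbert space and $\Phi=\{\phi_n\}_{n\ge1}$ a sequence of elements of $\mathrm{H}$, with truncations $\Phi_N=\{\phi_n\}_{n=1}^N$ and synthesis map $\mathcal T_N:\mathbb{C}^N\to\mathrm{H}$, $\mathcal T_N\mathbf z=\sum_{n=1}^N z_n\phi_n$. Fix $\epsilon>0$. For each $N$ let $G_N=\{\langle\phi_i,\phi_j\rangle\}_{i,j=1}^N$ be the Gram matrix, with eigen/singular value decomposition $G_N=V\Sigma V^*$, $V$ unitary with columns $v_1,\dots,v_N$ and singular values $\sigma_1,\dots,\sigma_N\ge0$. Define $\mathrm{H}_N^\epsilon\triangleq\operatorname{span}\{\mathcal T_Nv_k:\sigma_k>\epsilon\}$, let $\mathcal P_N^\epsilon f$ be the orthogonal projection of $f\in\mathrm{H}$ onto $\mathrm{H}_N^\epsilon$, and let $\mathbf c^\epsilon_N\in\mathbb{C}^N$ be its coefficient vector obtained as the truncated-SVD regularised solution of $G_N\mathbf c=\mathbf b$, $\mathbf b=\{\langle f,\phi_n\rangle\}_{n=1}^N$, discarding singular values $\le\epsilon$ (so $\mathcal P^\epsilon_Nf=\mathcal T_N\mathbf c^\epsilon_N$). Then for every $f\in\mathrm{H}$ and $N\ge2$, $$\|f-\mathcal P_N^\epsilon f\|_{\mathrm{H}}\le\|f-\mathcal P^\epsilon_{N-1}f\|_{\mathrm{H}}+\sqrt{\epsilon}\,\|\mathbf c^\epsilon_{N-1}\|_{\ell^2(\mathbb{C}^{N-1})}.$$ *)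

theory Defs
  imports Complex_Main "Jordan_Normal_Form.Schur_Decomposition"
begin

text \<open>A Hilbert space is additionally
  of sort complete_space.\<close>

class complex_vector = real_vector +
  fixes scaleC :: "complex \<Rightarrow> 'a \<Rightarrow> 'a"  (infixr \<open>*\<^sub>C\<close> 75)
  assumes scaleC_add_right: "a *\<^sub>C (x + y) = a *\<^sub>C x + a *\<^sub>C y"
    and scaleC_add_left: "(a + b) *\<^sub>C x = a *\<^sub>C x + b *\<^sub>C x"
    and scaleC_scaleC: "a *\<^sub>C (b *\<^sub>C x) = (a * b) *\<^sub>C x"
    and scaleC_one: "1 *\<^sub>C x = x"
    and scaleR_scaleC: "scaleR r x = complex_of_real r *\<^sub>C x"

class complex_inner = complex_vector + real_normed_vector +
  fixes cinner :: "'a \<Rightarrow> 'a \<Rightarrow> complex"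
  assumes cinner_commute: "cinner x y = cnj (cinner y x)"
    and cinner_add_left: "cinner (x + y) z = cinner x z + cinner y z"
    and cinner_scaleC_left: "cinner (a *\<^sub>C x) y = a * cinner x y"
    and cinner_ge_zero: "0 \<le> Re (cinner x x)"
    and cinner_eq_zero_iff: "cinner x x = 0 \<longleftrightarrow> x = 0"
    and norm_eq_sqrt_cinner: "norm x = sqrt (Re (cinner x x))"

definition cspan :: "'a::complex_vector set \<Rightarrow> 'a set" where
  "cspan S = {(\<Sum>x\<in>F. c x *\<^sub>C x) | F c. finite F \<and> F \<subseteq> S}"

definition orth_proj :: "'a::complex_inner set \<Rightarrow> 'a \<Rightarrow> 'a" where
  "orth_proj S f = (THE p. p \<in> S \<and> (\<forall>s\<in>S. cinner (f - p) s = 0))"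

text \<open>The sequence phi_1, phi_2, ... is represented as phi 0, phi 1, ...;
  the truncation Phi_N is phi 0, ..., phi (N-1).\<close>

definition synth :: "(nat \<Rightarrow> 'a::complex_vector) \<Rightarrow> nat \<Rightarrow> complex vec \<Rightarrow> 'a" where
  "synth \<phi> N z = (\<Sum>n<N. (z $ n) *\<^sub>C \<phi> n)"

text \<open>Gram matrix of Phi_N, normalised so that (G c)_i = <T_N c, phi_i>,
  i.e. G = T_N^* T_N (inner product linear in the first argument).\<close>
definition gram :: "(nat \<Rightarrow> 'a::complex_inner) \<Rightarrow> nat \<Rightarrow> complex mat" where
  "gram \<phi> N = mat N N (\<lambda>(i, j). cinner (\<phi> j) (\<phi> i))"

definition data_vec :: "(nat \<Rightarrow> 'a::complex_inner) \<Rightarrow> nat \<Rightarrow> 'a \<Rightarrow> complex vec" where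
  "data_vec \<phi> N f = vec N (\<lambda>i. cinner f (\<phi> i))"

definition unitary_mat :: "nat \<Rightarrow> complex mat \<Rightarrow> bool" where
  "unitary_mat N V \<longleftrightarrow> V \<in> carrier_mat N N \<and> mat_adjoint V * V = 1\<^sub>m N"

definition gram_svd :: "(nat \<Rightarrow> 'a::complex_inner) \<Rightarrow> nat \<Rightarrow> complex mat \<Rightarrow> (nat \<Rightarrow> real) \<Rightarrow> bool" where
  "gram_svd \<phi> N V \<sigma> \<longleftrightarrow> unitary_mat N V \<and> (\<forall>k<N. 0 \<le> \<sigma> k) \<and>
     gram \<phi> N = V * mat_diag N (\<lambda>k. complex_of_real (\<sigma> k)) * mat_adjoint V"

definition H_eps :: "(nat \<Rightarrow> 'a::complex_inner) \<Rightarrow> nat \<Rightarrow> complex mat \<Rightarrow> (nat \<Rightarrow> real) \<Rightarrow> real \<Rightarrow> 'a set" where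
  "H_eps \<phi> N V \<sigma> \<epsilon> = cspan {synth \<phi> N (col V k) | k. k < N \<and> \<epsilon> < \<sigma> k}"

definition tsvd_coeffs :: "(nat \<Rightarrow> 'a::complex_inner) \<Rightarrow> nat \<Rightarrow> complex mat \<Rightarrow> (nat \<Rightarrow> real) \<Rightarrow> real \<Rightarrow> 'a \<Rightarrow> complex vec" where
  "tsvd_coeffs \<phi> N V \<sigma> \<epsilon> f =
     (V * mat_diag N (\<lambda>k. if \<epsilon> < \<sigma> k then complex_of_real (1 / \<sigma> k) else 0) * mat_adjoint V)
       *\<^sub>v data_vec \<phi> N f"

definition l2_norm :: "complex vec \<Rightarrow> real" where
  "l2_norm c = sqrt (\<Sum>i<dim_vec c. (cmod (c $ i))\<^sup>2)"

end

theory Submission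
  imports Defs
begin


lemma scaleC_zero_left[simp]: "(0::complex) *\<^sub>C (x::'a::complex_vector) = 0"
proof -
  have "0 *\<^sub>C x = 0 *\<^sub>C x + 0 *\<^sub>C x" by (metis add_0 scaleC_add_left)
  then show ?thesis by simp
qed

lemma scaleC_zero_right[simp]: "a *\<^sub>C (0::'a::complex_vector) = 0"
proof -
  have "a *\<^sub>C (0::'a) = a *\<^sub>C 0 + a *\<^sub>C 0" by (metis add_0 scaleC_add_right)
  then show ?thesis by simp
qed

lemma scaleC_diff_left: "(a - b) *\<^sub>C (x::'a::complex_vector) = a *\<^sub>C x - b *\<^sub>C x"
  by (metis add_diff_cancel diff_add_cancel scaleC_add_left)

lemma scaleC_diff_right: "a *\<^sub>C ((x::'a::complex_vector) - y) = a *\<^sub>C x - a *\<^sub>C y"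
  by (metis add_diff_cancel diff_add_cancel scaleC_add_right)

lemma scaleC_sum_right: "a *\<^sub>C (\<Sum>i\<in>A. g i) = (\<Sum>i\<in>A. a *\<^sub>C (g i::'a::complex_vector))"
  using sum_comp_morphism[of "\<lambda>x. a *\<^sub>C (x::'a)" g A] by (simp add: scaleC_add_right o_def)

lemma scaleC_sum_left: "(\<Sum>i\<in>A. g i) *\<^sub>C (x::'a::complex_vector) = (\<Sum>i\<in>A. g i *\<^sub>C x)"
  using sum_comp_morphism[of "\<lambda>a. a *\<^sub>C (x::'a)" g A] by (simp add: scaleC_add_left o_def)

lemma cinner_zero_left[simp]: "cinner (0::'a::complex_inner) y = 0"
  by (metis add_0 add_cancel_right_right cinner_add_left)

lemma cinner_zero_right[simp]: "cinner (y::'a::complex_inner) 0 = 0"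
  by (metis cinner_commute cinner_zero_left complex_cnj_zero)

lemma cinner_add_right: "cinner (x::'a::complex_inner) (y + z) = cinner x y + cinner x z"
  by (metis cinner_add_left cinner_commute complex_cnj_add)

lemma cinner_scaleC_right: "cinner (x::'a::complex_inner) (a *\<^sub>C y) = cnj a * cinner x y"
  by (metis cinner_commute cinner_scaleC_left complex_cnj_cnj complex_cnj_mult)

lemma cinner_diff_left: "cinner ((x::'a::complex_inner) - y) z = cinner x z - cinner y z"
  by (metis add_diff_cancel diff_add_cancel cinner_add_left)

lemma cinner_diff_right: "cinner (x::'a::complex_inner) (y - z) = cinner x y - cinner x z"
  by (metis add_diff_cancel diff_add_cancel cinner_add_right)

lemma cinner_sum_left: "cinner (\<Sum>i\<in>A. g i) (y::'a::complex_inner) = (\<Sum>i\<in>A. cinner (g i) y)"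
  using sum_comp_morphism[of "\<lambda>x. cinner x (y::'a)" g A] by (simp add: cinner_add_left o_def)

lemma cinner_sum_right: "cinner (y::'a::complex_inner) (\<Sum>i\<in>A. g i) = (\<Sum>i\<in>A. cinner y (g i))"
  using sum_comp_morphism[of "\<lambda>x. cinner (y::'a) x" g A] by (simp add: cinner_add_right o_def)

lemma cinner_self_real: "cinner (x::'a::complex_inner) x = complex_of_real ((norm x)\<^sup>2)"
proof -
  have "Im (cinner x x) = 0" using cinner_commute[of x x] by (metis complex.sel(2) cnj.sel(2) neg_equal_zero)
  then show ?thesis using cinner_ge_zero[of x] norm_eq_sqrt_cinner[of x]
    by (simp add: complex_eq_iff)
qed

lemma norm_sq_cinner: "(norm (x::'a::complex_inner))\<^sup>2 = Re (cinner x x)"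
  using cinner_self_real[of x] by simp



lemma cspan_orth:
  assumes "\<And>s. s \<in> S \<Longrightarrow> cinner (z::'a::complex_inner) s = 0" and "y \<in> cspan S"
  shows "cinner z y = 0"
proof -
  obtain F c where y: "y = (\<Sum>x\<in>F. c x *\<^sub>C x)" and F: "finite F" "F \<subseteq> S"
    using assms(2) unfolding cspan_def by blast
  have "cinner z y = (\<Sum>x\<in>F. cnj (c x) * cinner z x)"
    by (simp add: y cinner_sum_right cinner_scaleC_right)
  also have "\<dots> = 0" using F assms(1) by (auto intro!: sum.neutral)
  finally show ?thesis .
qed

lemma cspan_sum_image:
  assumes "finite K"
  shows "(\<Sum>k\<in>K. a k *\<^sub>C g k) \<in> cspan (g ` K)"
proof -
  have "(\<Sum>k\<in>K. a k *\<^sub>C g k) = (\<Sum>x\<in>g ` K. \<Sum>k\<in>{k\<in>K. g k = x}. a k *\<^sub>C g k)"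
    using sum.image_gen[OF assms, of "\<lambda>k. a k *\<^sub>C g k" g] .
  also have "\<dots> = (\<Sum>x\<in>g ` K. (\<Sum>k\<in>{k\<in>K. g k = x}. a k) *\<^sub>C x)"
    by (intro sum.cong refl) (simp add: scaleC_sum_left)
  finally have e: "(\<Sum>k\<in>K. a k *\<^sub>C g k) = (\<Sum>x\<in>g ` K. (\<Sum>k\<in>{k\<in>K. g k = x}. a k) *\<^sub>C x)" .
  have fi: "finite (g ` K)" using assms by simp
  show ?thesis unfolding cspan_def
    apply (rule CollectI)
    apply (rule exI[of _ "g ` K"])
    apply (rule exI[of _ "\<lambda>x. \<Sum>k\<in>{k\<in>K. g k = x}. a k"])
    using e fi by blast
qed

lemma orth_proj_eq:
  assumes "p \<in> S" and "\<forall>s\<in>S. cinner (f - p) s = 0"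
  shows "orth_proj S (f::'a::complex_inner) = p"
  unfolding orth_proj_def
proof (rule the_equality)
  show "p \<in> S \<and> (\<forall>s\<in>S. cinner (f - p) s = 0)" using assms by blast
next
  fix q assume q: "q \<in> S \<and> (\<forall>s\<in>S. cinner (f - q) s = 0)"
  have qp: "q - p = (f - p) - (f - q)" by simp
  have z: "cinner (q - p) s = 0" if "s \<in> S" for s
  proof -
    have "cinner (q - p) s = cinner (f - p) s - cinner (f - q) s" by (simp only: qp cinner_diff_left)
    then show ?thesis using q assms that by simp
  qed
  have "cinner (q - p) (q - p) = cinner (q - p) q - cinner (q - p) p"
    by (simp only: cinner_diff_right)
  also have "\<dots> = 0" using z q assms(1) by simp
  finally show "q = p" using cinner_eq_zero_iff[of "q - p"] by simp
qed

lemma proj_min: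
  assumes "p \<in> S" and "\<forall>s\<in>S. cinner (f - p) s = 0" and "g \<in> S"
  shows "norm ((f::'a::complex_inner) - p) \<le> norm (f - g)"
proof -
  have fg: "f - g = (f - p) + (p - g)" by simp
  have o: "cinner (f - p) (p - g) = 0" using assms by (simp add: cinner_diff_right)
  hence o2: "cinner (p - g) (f - p) = 0" by (metis cinner_commute complex_cnj_zero)
  have "cinner (f - g) (f - g) = cinner ((f - p) + (p - g)) ((f - p) + (p - g))"
    by (simp only: fg)
  also have "\<dots> = cinner (f - p) (f - p) + cinner (p - g) (p - g)"
    by (simp only: cinner_add_left cinner_add_right o o2) simp
  finally have "(norm (f - g))\<^sup>2 = (norm (f - p))\<^sup>2 + Re (cinner (p - g) (p - g))"
    unfolding norm_sq_cinner by simp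
  moreover have "0 \<le> Re (cinner (p - g) (p - g))" by (rule cinner_ge_zero)
  ultimately have "(norm (f - p))\<^sup>2 \<le> (norm (f - g))\<^sup>2" by linarith
  then show ?thesis by (rule power2_le_imp_le) simp
qed



lemma adj_carrier[simp]: "W \<in> carrier_mat M M \<Longrightarrow> mat_adjoint (W::complex mat) \<in> carrier_mat M M"
  unfolding mat_adjoint_def by auto

lemma adj_dims[simp]: "dim_row (mat_adjoint W) = dim_col W" "dim_col (mat_adjoint W) = dim_row W"
  unfolding mat_adjoint_def by auto

lemma adj_idx: "W \<in> carrier_mat M M \<Longrightarrow> i < M \<Longrightarrow> j < M \<Longrightarrow>
   mat_adjoint (W::complex mat) $$ (i,j) = cnj (W $$ (j,i))"
  unfolding mat_adjoint_def by (simp add: mat_of_rows_index)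

lemma diag_mult_vec: "v \<in> carrier_vec n \<Longrightarrow> j < n \<Longrightarrow>
   (mat_diag n f *\<^sub>v v) $ j = f j * (v $ j :: 'a::comm_ring_1)"
proof -
  assume v: "v \<in> carrier_vec n" and j: "j < n"
  have "(mat_diag n f *\<^sub>v v) $ j = (\<Sum>i\<in>{0..<n}. (if j = i then f i else 0) * v$i)"
    using v j by (simp add: mat_diag_def scalar_prod_def)
  also have "\<dots> = (\<Sum>i\<in>{0..<n}. (if j = i then f i * v$i else 0))"
    by (rule sum.cong) auto
  also have "\<dots> = f j * v $ j" using j by (simp add: sum.delta)
  finally show ?thesis .
qed

lemma adj_prop:
  assumes W: "W \<in> carrier_mat M M" and y: "y \<in> carrier_vec M" and z: "z \<in> carrier_vec M"
  shows "(\<Sum>i<M. cnj (y$i) * (W *\<^sub>v z)$i) = (\<Sum>j<M. cnj ((mat_adjoint W *\<^sub>v y)$j) * z$j)"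
proof -
  have "(\<Sum>i<M. cnj (y$i) * (W *\<^sub>v z)$i) = (\<Sum>i<M. \<Sum>j<M. cnj (y$i) * W $$ (i,j) * z$j)"
    using W z by (simp add: scalar_prod_def sum_distrib_left mult.assoc atLeast0LessThan)
  also have "\<dots> = (\<Sum>j<M. \<Sum>i<M. cnj (y$i) * W $$ (i,j) * z$j)" by (rule sum.swap)
  also have "\<dots> = (\<Sum>j<M. cnj ((mat_adjoint W *\<^sub>v y)$j) * z$j)"
    using W y by (simp add: scalar_prod_def sum_distrib_right adj_idx atLeast0LessThan mult.commute sum_distrib_left)
  finally show ?thesis .
qed



lemma synth_inner:
  assumes x: "x \<in> carrier_vec M" and y: "y \<in> carrier_vec M"
  shows "cinner (synth \<phi> M x) (synth \<phi> M y) = (\<Sum>i<M. cnj (y$i) * (gram \<phi> M *\<^sub>v x)$i)"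
proof -
  have "cinner (synth \<phi> M x) (synth \<phi> M y) = (\<Sum>m<M. \<Sum>n<M. x$n * cnj (y$m) * cinner (\<phi> n) (\<phi> m))"
    unfolding synth_def by (simp add: cinner_sum_left cinner_sum_right cinner_scaleC_left
       cinner_scaleC_right sum_distrib_left mult.assoc mult.left_commute)
  also have "\<dots> = (\<Sum>i<M. cnj (y$i) * (gram \<phi> M *\<^sub>v x)$i)"
    using x by (simp add: gram_def scalar_prod_def sum_distrib_left atLeast0LessThan mult.commute mult.left_commute)
  finally show ?thesis .
qed

lemma synth_data:
  "cinner f (synth \<phi> M y) = (\<Sum>i<M. cnj (y$i) * (data_vec \<phi> M f)$i)"
  unfolding synth_def data_vec_def
  by (simp add: cinner_sum_right cinner_scaleC_right)

lemma synth_mult: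
  assumes W: "W \<in> carrier_mat M M" and z: "z \<in> carrier_vec M"
  shows "synth \<phi> M (W *\<^sub>v z) = (\<Sum>k<M. (z$k) *\<^sub>C synth \<phi> M (col W k))"
proof -
  have "synth \<phi> M (W *\<^sub>v z) = (\<Sum>n<M. \<Sum>k<M. (W $$ (n,k) * z$k) *\<^sub>C \<phi> n)"
    unfolding synth_def using W z by (simp add: scalar_prod_def scaleC_sum_left atLeast0LessThan)
  also have "\<dots> = (\<Sum>k<M. \<Sum>n<M. (W $$ (n,k) * z$k) *\<^sub>C \<phi> n)" by (rule sum.swap)
  also have "\<dots> = (\<Sum>k<M. (z$k) *\<^sub>C synth \<phi> M (col W k))"
    unfolding synth_def using W
    by (simp add: scaleC_sum_right scaleC_scaleC mult.commute)
  finally show ?thesis .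
qed

lemma synth_diff:
  assumes "x \<in> carrier_vec M" and "y \<in> carrier_vec M"
  shows "synth \<phi> M (x - y) = synth \<phi> M x - synth \<phi> M y"
  unfolding synth_def using assms by (simp add: scaleC_diff_left sum_subtractf)



lemma mult_unit_vec:
  assumes W: "(W::complex mat) \<in> carrier_mat M M" and k: "k < M"
  shows "W *\<^sub>v unit_vec M k = col W k"
proof (rule eq_vecI)
  show "dim_vec (W *\<^sub>v unit_vec M k) = dim_vec (col W k)" using W by simp
  fix i assume "i < dim_vec (col W k)"
  hence i: "i < M" using W by simp
  have "(W *\<^sub>v unit_vec M k) $ i = (\<Sum>j\<in>{0..<M}. W $$ (i,j) * (if j = k then 1 else 0))"
    using W i by (simp add: scalar_prod_def unit_vec_def)
  also have "\<dots> = (\<Sum>j\<in>{0..<M}. if k = j then W $$ (i,j) else 0)" by (rule sum.cong) auto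
  also have "\<dots> = W $$ (i,k)" using k by (simp add: sum.delta)
  finally show "(W *\<^sub>v unit_vec M k) $ i = col W k $ i" using W i k by simp
qed

lemma svdD:
  assumes "gram_svd \<phi> M W \<tau>"
  shows "W \<in> carrier_mat M M" "mat_adjoint W * W = 1\<^sub>m M" "W * mat_adjoint W = 1\<^sub>m M"
    "\<And>k. k < M \<Longrightarrow> 0 \<le> \<tau> k"
    "gram \<phi> M = W * mat_diag M (\<lambda>k. complex_of_real (\<tau> k)) * mat_adjoint W"
  using assms unfolding gram_svd_def unitary_mat_def
  by (auto intro: mat_mult_left_right_inverse[of "mat_adjoint W" M W])

lemma adj_mult_cancel:
  assumes "gram_svd \<phi> M W \<tau>" and z: "z \<in> carrier_vec M"
  shows "mat_adjoint W *\<^sub>v (W *\<^sub>v z) = z"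
proof -
  note s = svdD[OF assms(1)]
  have "mat_adjoint W *\<^sub>v (W *\<^sub>v z) = (mat_adjoint W * W) *\<^sub>v z"
    using s(1) z by (intro assoc_mult_mat_vec[symmetric, of _ M M _ M]) auto
  then show ?thesis using s(2) z by simp
qed

lemma mult_adj_cancel:
  assumes "gram_svd \<phi> M W \<tau>" and z: "z \<in> carrier_vec M"
  shows "W *\<^sub>v (mat_adjoint W *\<^sub>v z) = z"
proof -
  note s = svdD[OF assms(1)]
  have "W *\<^sub>v (mat_adjoint W *\<^sub>v z) = (W * mat_adjoint W) *\<^sub>v z"
    using s(1) z by (intro assoc_mult_mat_vec[symmetric, of _ M M _ M]) auto
  then show ?thesis using s(3) z by simp
qed

lemma key_inner:
  assumes svd: "gram_svd \<phi> M W \<tau>" and z: "z \<in> carrier_vec M" and u: "u \<in> carrier_vec M"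
  shows "cinner (synth \<phi> M (W *\<^sub>v z)) (synth \<phi> M (W *\<^sub>v u))
       = (\<Sum>k<M. complex_of_real (\<tau> k) * z$k * cnj (u$k))"
proof -
  note s = svdD[OF svd]
  let ?D = "mat_diag M (\<lambda>k. complex_of_real (\<tau> k))"
  have Wz: "W *\<^sub>v z \<in> carrier_vec M" "W *\<^sub>v u \<in> carrier_vec M" using s(1) z u by auto
  have "gram \<phi> M *\<^sub>v (W *\<^sub>v z) = (W * ?D) *\<^sub>v (mat_adjoint W *\<^sub>v (W *\<^sub>v z))"
    unfolding s(5) using s(1) Wz by (subst assoc_mult_mat_vec[of _ M M _ M]) auto
  also have "\<dots> = W *\<^sub>v (?D *\<^sub>v z)"
    unfolding adj_mult_cancel[OF svd z] using s(1) z by (intro assoc_mult_mat_vec[of _ M M _ M]) auto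
  finally have g: "gram \<phi> M *\<^sub>v (W *\<^sub>v z) = W *\<^sub>v (?D *\<^sub>v z)" .
  have "cinner (synth \<phi> M (W *\<^sub>v z)) (synth \<phi> M (W *\<^sub>v u))
      = (\<Sum>i<M. cnj ((W *\<^sub>v u)$i) * (W *\<^sub>v (?D *\<^sub>v z))$i)"
    unfolding synth_inner[OF Wz] g ..
  also have "\<dots> = (\<Sum>j<M. cnj ((mat_adjoint W *\<^sub>v (W *\<^sub>v u))$j) * (?D *\<^sub>v z)$j)"
    by (rule adj_prop[OF s(1) Wz(2) mult_mat_vec_carrier[OF mat_diag_dim z]])
  also have "\<dots> = (\<Sum>k<M. complex_of_real (\<tau> k) * z$k * cnj (u$k))"
    unfolding adj_mult_cancel[OF svd u] using z by (intro sum.cong refl) (simp add: diag_mult_vec)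
  finally show ?thesis .
qed



lemma in_H_eps:
  assumes svd: "gram_svd \<phi> M W \<tau>" and z: "z \<in> carrier_vec M"
    and zero: "\<And>k. k < M \<Longrightarrow> \<not> \<epsilon> < \<tau> k \<Longrightarrow> z$k = 0"
  shows "synth \<phi> M (W *\<^sub>v z) \<in> H_eps \<phi> M W \<tau> \<epsilon>"
proof -
  note s = svdD[OF svd]
  let ?g = "\<lambda>k. synth \<phi> M (col W k)"
  let ?K = "{k. k < M \<and> \<epsilon> < \<tau> k}"
  have "synth \<phi> M (W *\<^sub>v z) = (\<Sum>k<M. z$k *\<^sub>C ?g k)" by (rule synth_mult[OF s(1) z])
  also have "\<dots> = (\<Sum>k\<in>?K. z$k *\<^sub>C ?g k)"
    by (rule sum.mono_neutral_right) (auto simp: zero)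
  finally have "synth \<phi> M (W *\<^sub>v z) \<in> cspan (?g ` ?K)"
    using cspan_sum_image[of ?K "\<lambda>k. z$k" ?g] by simp
  moreover have "?g ` ?K = {synth \<phi> M (col W k) | k. k < M \<and> \<epsilon> < \<tau> k}" by blast
  ultimately show ?thesis unfolding H_eps_def by simp
qed

lemma gen_inner:
  assumes svd: "gram_svd \<phi> M W \<tau>" and z: "z \<in> carrier_vec M" and j: "j < M"
  shows "cinner (synth \<phi> M (W *\<^sub>v z)) (synth \<phi> M (col W j)) = complex_of_real (\<tau> j) * z$j"
proof -
  note s = svdD[OF svd]
  have "cinner (synth \<phi> M (W *\<^sub>v z)) (synth \<phi> M (col W j))
      = (\<Sum>k<M. complex_of_real (\<tau> k) * z$k * cnj (unit_vec M j $ k))"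
    unfolding mult_unit_vec[OF s(1) j, symmetric] by (rule key_inner[OF svd z]) simp
  also have "\<dots> = (\<Sum>k<M. if j = k then complex_of_real (\<tau> k) * z$k else 0)"
    by (rule sum.cong) (auto simp: unit_vec_def)
  also have "\<dots> = complex_of_real (\<tau> j) * z$j" using j by simp
  finally show ?thesis .
qed

definition zf :: "(nat \<Rightarrow> 'a::complex_inner) \<Rightarrow> nat \<Rightarrow> complex mat \<Rightarrow> (nat \<Rightarrow> real) \<Rightarrow> real \<Rightarrow> 'a \<Rightarrow> complex vec" where
  "zf \<phi> M W \<tau> \<epsilon> f = vec M (\<lambda>k. (if \<epsilon> < \<tau> k then complex_of_real (1 / \<tau> k) else 0)
        * (mat_adjoint W *\<^sub>v data_vec \<phi> M f) $ k)"

lemma tsvd_eq: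
  assumes svd: "gram_svd \<phi> M W \<tau>"
  shows "tsvd_coeffs \<phi> M W \<tau> \<epsilon> f = W *\<^sub>v zf \<phi> M W \<tau> \<epsilon> f"
proof -
  note s = svdD[OF svd]
  let ?D = "mat_diag M (\<lambda>k. if \<epsilon> < \<tau> k then complex_of_real (1 / \<tau> k) else 0)"
  let ?b = "data_vec \<phi> M f"
  have b: "?b \<in> carrier_vec M" by (simp add: data_vec_def)
  have "tsvd_coeffs \<phi> M W \<tau> \<epsilon> f = (W * ?D) *\<^sub>v (mat_adjoint W *\<^sub>v ?b)"
    unfolding tsvd_coeffs_def using s(1) b by (intro assoc_mult_mat_vec[of _ M M _ M]) auto
  also have "\<dots> = W *\<^sub>v (?D *\<^sub>v (mat_adjoint W *\<^sub>v ?b))"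
    using s(1) b mult_mat_vec_carrier[OF adj_carrier[OF s(1)] b] by (intro assoc_mult_mat_vec[of _ M M _ M]) auto
  also have "?D *\<^sub>v (mat_adjoint W *\<^sub>v ?b) = zf \<phi> M W \<tau> \<epsilon> f"
  proof (rule eq_vecI)
    fix k assume "k < dim_vec (zf \<phi> M W \<tau> \<epsilon> f)"
    hence k: "k < M" by (simp add: zf_def)
    show "(?D *\<^sub>v (mat_adjoint W *\<^sub>v ?b)) $ k = zf \<phi> M W \<tau> \<epsilon> f $ k"
      unfolding zf_def using k s(1) b mult_mat_vec_carrier[OF adj_carrier[OF s(1)] b]
      by (subst diag_mult_vec[of _ M]) auto
  qed (simp add: zf_def mat_diag_def)
  finally show ?thesis .
qed

lemma proj_formula:
  assumes svd: "gram_svd \<phi> M W \<tau>" and eps: "\<epsilon> \<ge> 0"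
  shows "orth_proj (H_eps \<phi> M W \<tau> \<epsilon>) f = synth \<phi> M (tsvd_coeffs \<phi> M W \<tau> \<epsilon> f)"
    and "orth_proj (H_eps \<phi> M W \<tau> \<epsilon>) f \<in> H_eps \<phi> M W \<tau> \<epsilon>"
    and "\<forall>s\<in>H_eps \<phi> M W \<tau> \<epsilon>. cinner (f - orth_proj (H_eps \<phi> M W \<tau> \<epsilon>) f) s = 0"
proof -
  note s = svdD[OF svd]
  let ?z = "zf \<phi> M W \<tau> \<epsilon> f"
  let ?b = "data_vec \<phi> M f"
  have z: "?z \<in> carrier_vec M" by (simp add: zf_def)
  let ?p = "synth \<phi> M (W *\<^sub>v ?z)"
  have mem: "?p \<in> H_eps \<phi> M W \<tau> \<epsilon>"
    by (rule in_H_eps[OF svd z]) (simp add: zf_def)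
  have orth: "cinner (f - ?p) s = 0" if sS: "s \<in> {synth \<phi> M (col W k) | k. k < M \<and> \<epsilon> < \<tau> k}" for s
  proof -
    obtain j where j: "j < M" "\<epsilon> < \<tau> j" and sj: "s = synth \<phi> M (col W j)" using sS by blast
    have tp: "\<tau> j > 0" using j eps by linarith
    have "cinner f s = (\<Sum>i<M. cnj (col W j $ i) * ?b $ i)" unfolding sj by (rule synth_data)
    also have "\<dots> = (mat_adjoint W *\<^sub>v ?b) $ j"
      using s(1) j by (simp add: scalar_prod_def adj_idx data_vec_def atLeast0LessThan)
    finally have e1: "cinner f s = (mat_adjoint W *\<^sub>v ?b) $ j" .
    have "cinner ?p s = complex_of_real (\<tau> j) * ?z $ j" unfolding sj by (rule gen_inner[OF svd z j(1)])
    also have "\<dots> = (mat_adjoint W *\<^sub>v ?b) $ j" using j tp by (simp add: zf_def)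
    finally show ?thesis using e1 by (simp add: cinner_diff_left)
  qed
  have all: "\<forall>s\<in>H_eps \<phi> M W \<tau> \<epsilon>. cinner (f - ?p) s = 0"
    by (auto simp: H_eps_def intro: cspan_orth[OF orth])
  have e: "orth_proj (H_eps \<phi> M W \<tau> \<epsilon>) f = ?p"
    by (rule orth_proj_eq[OF mem all])
  show "orth_proj (H_eps \<phi> M W \<tau> \<epsilon>) f = synth \<phi> M (tsvd_coeffs \<phi> M W \<tau> \<epsilon> f)"
    using e by (simp add: tsvd_eq[OF svd])
  show "orth_proj (H_eps \<phi> M W \<tau> \<epsilon>) f \<in> H_eps \<phi> M W \<tau> \<epsilon>" using e mem by simp
  show "\<forall>s\<in>H_eps \<phi> M W \<tau> \<epsilon>. cinner (f - orth_proj (H_eps \<phi> M W \<tau> \<epsilon>) f) s = 0"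
    using e all by simp
qed

theorem theorem1:
  fixes \<phi> :: "nat \<Rightarrow> 'a::{complex_inner, complete_space}"
    and f :: 'a and \<epsilon> :: real and N :: nat
    and V V' :: "complex mat" and \<sigma> \<sigma>' :: "nat \<Rightarrow> real"
  assumes "\<epsilon> > 0" and "N \<ge> 2"
    and "gram_svd \<phi> N V \<sigma>"
    and "gram_svd \<phi> (N - 1) V' \<sigma>'"
  shows "norm (f - orth_proj (H_eps \<phi> N V \<sigma> \<epsilon>) f)
           \<le> norm (f - orth_proj (H_eps \<phi> (N - 1) V' \<sigma>' \<epsilon>) f)
              + sqrt \<epsilon> * l2_norm (tsvd_coeffs \<phi> (N - 1) V' \<sigma>' \<epsilon> f)"
proof -
  note eps = assms(1) and svdN = assms(3) and svdn = assms(4)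
  define n where "n = N - 1"
  have Nn: "N = Suc n" using assms(2) unfolding n_def by simp
  note sN = svdD[OF svdN] and sn = svdD[OF svdn[folded n_def]]
  define c where "c = tsvd_coeffs \<phi> n V' \<sigma>' \<epsilon> f"
  have c: "c \<in> carrier_vec n" unfolding c_def tsvd_eq[OF svdn[folded n_def]]
    using sn(1) by (simp add: zf_def)
  have P1: "orth_proj (H_eps \<phi> n V' \<sigma>' \<epsilon>) f = synth \<phi> n c"
    unfolding c_def by (rule proj_formula(1)[OF svdn[folded n_def]]) (use eps in simp)
  let ?S = "H_eps \<phi> N V \<sigma> \<epsilon>"
  have PN: "orth_proj ?S f \<in> ?S" "\<forall>s\<in>?S. cinner (f - orth_proj ?S f) s = 0"
    using proj_formula(2,3)[OF svdN, of \<epsilon> f] eps by auto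
  define c' where "c' = vec N (\<lambda>i. if i < n then c$i else 0)"
  have c': "c' \<in> carrier_vec N" by (simp add: c'_def)
  have "synth \<phi> N c' = (\<Sum>i<Suc n. (if i < n then c$i else 0) *\<^sub>C \<phi> i)"
    unfolding synth_def c'_def Nn by simp
  also have "\<dots> = synth \<phi> n c" unfolding synth_def by (auto intro!: sum.cong)
  finally have sync: "synth \<phi> N c' = synth \<phi> n c" .
  define u where "u = mat_adjoint V *\<^sub>v c'"
  have u: "u \<in> carrier_vec N" unfolding u_def by (rule mult_mat_vec_carrier[OF adj_carrier[OF sN(1)] c'])
  have c'u: "c' = V *\<^sub>v u" unfolding u_def by (rule mult_adj_cancel[OF svdN c', symmetric])
  define w where "w = vec N (\<lambda>k. if \<epsilon> < \<sigma> k then u$k else 0)"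
  define r where "r = vec N (\<lambda>k. if \<epsilon> < \<sigma> k then 0 else u$k)"
  have w: "w \<in> carrier_vec N" and r: "r \<in> carrier_vec N" by (simp_all add: w_def r_def)
  have uwr: "u - w = r" by (rule eq_vecI) (use u in \<open>auto simp: w_def r_def\<close>)
  define g where "g = synth \<phi> N (V *\<^sub>v w)"
  have gS: "g \<in> ?S" unfolding g_def by (rule in_H_eps[OF svdN w]) (simp add: w_def)
  define h where "h = synth \<phi> N c' - g"
  have h: "h = synth \<phi> N (V *\<^sub>v r)"
  proof -
    have "V *\<^sub>v r = V *\<^sub>v u - V *\<^sub>v w" unfolding uwr[symmetric]
      using sN(1) u w by (rule mult_minus_distrib_mat_vec)
    then show ?thesis unfolding h_def g_def c'u
      using sN(1) u w by (simp add: synth_diff[of _ N])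
  qed
  have "(norm h)\<^sup>2 = Re (\<Sum>k<N. complex_of_real (\<sigma> k) * r$k * cnj (r$k))"
    unfolding norm_sq_cinner h key_inner[OF svdN r r] ..
  also have "\<dots> = (\<Sum>k<N. \<sigma> k * (cmod (r$k))\<^sup>2)"
    by (simp add: mult.assoc complex_norm_square[symmetric] flip: of_real_mult)
  also have "\<dots> \<le> (\<Sum>k<N. \<epsilon> * (cmod (u$k))\<^sup>2)"
  proof (rule sum_mono)
    fix k assume "k \<in> {..<N}"
    then have k: "k < N" by simp
    show "\<sigma> k * (cmod (r$k))\<^sup>2 \<le> \<epsilon> * (cmod (u$k))\<^sup>2"
      using k sN(4)[OF k] eps by (auto simp: r_def intro: mult_right_mono)
  qed
  finally have hb1: "(norm h)\<^sup>2 \<le> (\<Sum>k<N. \<epsilon> * (cmod (u$k))\<^sup>2)" .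
  have "(\<Sum>k<N. (cmod (u$k))\<^sup>2) = (\<Sum>i<N. (cmod (c'$i))\<^sup>2)"
  proof -
    have "(\<Sum>i<N. cnj (c'$i) * (V *\<^sub>v u)$i) = (\<Sum>j<N. cnj ((mat_adjoint V *\<^sub>v c')$j) * u$j)"
      by (rule adj_prop[OF sN(1) c' u])
    then have "(\<Sum>i<N. cnj (c'$i) * c'$i) = (\<Sum>j<N. cnj (u$j) * u$j)"
      unfolding c'u[symmetric] u_def[symmetric] .
    then have "Re (\<Sum>i<N. cnj (c'$i) * c'$i) = Re (\<Sum>j<N. cnj (u$j) * u$j)" by simp
    then show ?thesis by (simp add: mult.commute[of "cnj _"] complex_norm_square[symmetric] flip: of_real_mult)
  qed
  also have "(\<Sum>i<N. (cmod (c'$i))\<^sup>2) = (l2_norm c)\<^sup>2"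
    using c unfolding l2_norm_def Nn c'_def by (simp add: sum_nonneg)
  finally have usum: "(\<Sum>k<N. (cmod (u$k))\<^sup>2) = (l2_norm c)\<^sup>2" .
  have hn: "(norm h)\<^sup>2 \<le> \<epsilon> * (l2_norm c)\<^sup>2"
    using hb1 usum by (simp add: sum_distrib_left[symmetric])
  have l2: "l2_norm c \<ge> 0" unfolding l2_norm_def by (simp add: sum_nonneg)
  have "(norm h)\<^sup>2 \<le> (sqrt \<epsilon> * l2_norm c)\<^sup>2" using hn eps by (simp add: power_mult_distrib)
  then have hb: "norm h \<le> sqrt \<epsilon> * l2_norm c" by (rule power2_le_imp_le) (use l2 eps in simp)
  have "norm (f - orth_proj ?S f) \<le> norm (f - g)" by (rule proj_min[OF PN gS])
  also have "f - g = (f - synth \<phi> N c') + h" unfolding h_def by simp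
  also have "norm \<dots> \<le> norm (f - synth \<phi> N c') + norm h" by (rule norm_triangle_ineq)
  finally show ?thesis using hb unfolding P1[unfolded n_def] sync[unfolded n_def] c_def n_def by simp
qed

end
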